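(* Let $d\ge 2$, $R_0>0$, and let $U:(0,\infty)\to\mathbb{R}$ be a measurable radial kernel profile such that $\int_{R_0}^{\infty}|U(r)|\,r^{d-2}\,e^{-r^2/\delta^2}\,dr<\infty$ for some $\delta>0$. For $\varepsilon>0$ let $U^{\varepsilon}(r)=U(r)\,\operatorname{Erf}(r/\varepsilon)$. Then for every $\varepsilon_{\rm tol}>0$ there exists $\varepsilon_0>0$ such that $$\int_{R_0}^{\infty}|(U-U^{\varepsilon})(r)|\,r^{d-1}\,dr\le\varepsilon_{\rm tol}\qquad\text{for all }0<\varepsilon<\varepsilon_0 .$$
   Context: $\operatorname{Erf}(x)=\frac{2}{\sqrt\pi}\int_0^x e^{-t^2}\,dt$ is the error function. *)

theory Defs
  imports "HOL-Analysis.Analysis"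
begin

definition Erf :: "real \<Rightarrow> real" where
  "Erf x = 2 / sqrt pi * (LBINT t=0..x. exp (- (t^2)))"

end

theory Submission imports Defs "HOL-Probability.Distributions" begin

lemma erf_tail:
  fixes x :: real assumes x: "0 \<le> x"
  shows "0 \<le> 1 - Erf x \<and> 1 - Erf x \<le> exp (- (x^2))"
proof -
  define g where "g = (\<lambda>t::real. exp (- (t^2)))"
  have gm[measurable]: "g \<in> borel_measurable borel" unfolding g_def by measurable
  have h0: "has_bochner_integral lborel (\<lambda>t. indicator {0..} t * g t) (sqrt pi / 2)"
    using gaussian_moment_0 unfolding g_def by simp
  have int0: "integrable lborel (\<lambda>t. indicator {0..} t * g t)"
    using h0 by (rule integrable.intros)
  have I0: "(\<integral>t. indicator {0..} t * g t \<partial>lborel) = sqrt pi / 2"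
    by (rule has_bochner_integral_integral_eq[OF h0])
  have J: "(LBINT t=0..x. g t) = (\<integral>t. indicator {0..x} t * g t \<partial>lborel)"
    using interval_integral_Icc[of 0 x g] x by (simp add: set_lebesgue_integral_def zero_ereal_def)
  have intJ: "integrable lborel (\<lambda>t. indicator {0..x} t * g t)"
  proof (rule Bochner_Integration.integrable_bound[OF int0])
    show "(\<lambda>t. indicator {0..x} t * g t) \<in> borel_measurable lborel" by measurable
    show "AE t in lborel. norm (indicator {0..x} t * g t) \<le> norm (indicator {0..} t * g t)"
      by (intro AE_I2) (simp add: g_def indicator_def)
  qed
  have tail: "sqrt pi / 2 - (\<integral>t. indicator {0..x} t * g t \<partial>lborel)
      = (\<integral>t. indicator {x<..} t * g t \<partial>lborel)"
  proof -
    have "sqrt pi / 2 - (\<integral>t. indicator {0..x} t * g t \<partial>lborel)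
      = (\<integral>t. indicator {0..} t * g t - indicator {0..x} t * g t \<partial>lborel)"
      using I0 by (simp add: Bochner_Integration.integral_diff[OF int0 intJ])
    also have "\<dots> = (\<integral>t. indicator {x<..} t * g t \<partial>lborel)"
      by (rule Bochner_Integration.integral_cong) (use x in \<open>auto simp: indicator_def\<close>)
    finally show ?thesis .
  qed
  have tnn: "0 \<le> (\<integral>t. indicator {x<..} t * g t \<partial>lborel)"
    by (rule Bochner_Integration.integral_nonneg) (simp add: g_def)
  have "(\<integral>t. indicator {x<..} t * g t \<partial>lborel)
      = (\<integral>s. indicator {x<..} (x + 1 * s) * g (x + 1 * s) \<partial>lborel)"
    using lborel_integral_real_affine[of 1 "\<lambda>t. indicator {x<..} t * g t" x] by simp
  also have "\<dots> \<le> (\<integral>s. g x * (indicator {0..} s * g s) \<partial>lborel)"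
  proof (rule integral_mono')
    show "integrable lborel (\<lambda>s. g x * (indicator {0..} s * g s))" using int0 by simp
  next
    fix s :: real
    show "0 \<le> g x * (indicator {0..} s * g s)" by (simp add: g_def)
    show "indicator {x<..} (x + 1 * s) * g (x + 1 * s) \<le> g x * (indicator {0..} s * g s)"
    proof (cases "0 < s")
      case True
      have "(x+s)^2 \<ge> x^2 + s^2" using True x by (simp add: power2_eq_square algebra_simps)
      hence "exp (- ((x+s)^2)) \<le> exp (- (x^2)) * exp (- (s^2))"
        by (simp flip: exp_add)
      then show ?thesis using True by (simp add: g_def)
    next
      case False then show ?thesis by (simp add: g_def)
    qed
  qed
  also have "\<dots> = g x * (sqrt pi / 2)" using I0 by simp
  finally have le: "(\<integral>t. indicator {x<..} t * g t \<partial>lborel) \<le> g x * (sqrt pi / 2)" .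
  have E: "1 - Erf x = 2 / sqrt pi * (\<integral>t. indicator {x<..} t * g t \<partial>lborel)"
  proof -
    have e1: "Erf x = 2 / sqrt pi * (\<integral>t. indicator {0..x} t * g t \<partial>lborel)"
      using J unfolding Erf_def g_def by simp
    have pp: "2 / sqrt pi * (sqrt pi / 2) = 1" by simp
    have "1 - Erf x = 2 / sqrt pi * (sqrt pi / 2 - (\<integral>t. indicator {0..x} t * g t \<partial>lborel))"
      unfolding e1 right_diff_distrib pp ..
    then show ?thesis unfolding tail .
  qed
  show ?thesis
  proof
    show "0 \<le> 1 - Erf x" using E tnn by simp
    have "1 - Erf x \<le> 2 / sqrt pi * (g x * (sqrt pi / 2))"
      unfolding E by (rule mult_left_mono[OF le]) simp
    also have "\<dots> = exp (- (x^2))" by (simp add: g_def)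
    finally show "1 - Erf x \<le> exp (- (x^2))" .
  qed
qed

lemma xexp_le: fixes y :: real shows "y * exp (- (y^2)) \<le> 1"
proof -
  have h: "(y - 1/2)^2 = y^2 - y + 1/4" by (simp add: power2_eq_square algebra_simps)
  have "y \<le> 1 + y^2" using zero_le_power2[of "y - 1/2"] unfolding h by linarith
  also have "\<dots> \<le> exp (y^2)" by (rule exp_ge_add_one_self)
  finally have "y \<le> exp (y^2)" .
  hence "y * exp (- (y^2)) \<le> exp (y^2) * exp (- (y^2))" by (intro mult_right_mono) auto
  also have "\<dots> = 1" by (simp flip: exp_add)
  finally show ?thesis .
qed

lemma pointwise:
  fixes r \<epsilon> \<delta> a u :: real and d :: nat
  assumes r: "r > 0" and e: "\<epsilon> > 0" and a: "a > 0" and ad: "a = 1/\<epsilon>^2 - 1/\<delta>^2" and d: "d \<ge> 2"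
  shows "\<bar>u - u * Erf (r / \<epsilon>)\<bar> * r ^ (d - 1)
     \<le> (1 / sqrt a) * (\<bar>u\<bar> * r ^ (d - 2) * exp (- (r^2) / \<delta>^2))"
proof -
  have t: "0 \<le> 1 - Erf (r/\<epsilon>)" "1 - Erf (r/\<epsilon>) \<le> exp (- ((r/\<epsilon>)^2))"
    using erf_tail[of "r/\<epsilon>"] r e by auto
  have p: "r ^ (d - 1) = r * r ^ (d - 2)" using d
    by (metis One_nat_def Suc_diff_Suc Suc_le_lessD numeral_2_eq_2 power_Suc)
  have ex: "exp (- ((r/\<epsilon>)^2)) = exp (- (r^2) / \<delta>^2) * exp (- (a * r^2))"
    unfolding ad by (simp add: power_divide field_simps flip: exp_add)
  have sa: "sqrt a > 0" using a by simp
  have k: "r * exp (- (a * r^2)) \<le> 1 / sqrt a"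
  proof -
    have "(sqrt a * r) * exp (- ((sqrt a * r)^2)) \<le> 1" by (rule xexp_le)
    moreover have "(sqrt a * r)^2 = a * r^2" using a by (simp add: power_mult_distrib)
    ultimately have "sqrt a * (r * exp (- (a * r^2))) \<le> 1" by (simp add: mult.assoc)
    thus ?thesis using sa by (simp add: field_simps mult.commute)
  qed
  have "\<bar>u - u * Erf (r / \<epsilon>)\<bar> * r ^ (d - 1) = \<bar>u\<bar> * (1 - Erf (r/\<epsilon>)) * r ^ (d - 1)"
  proof -
    have "u - u * Erf (r / \<epsilon>) = u * (1 - Erf (r/\<epsilon>))" by (simp add: algebra_simps)
    then show ?thesis using t(1) by (simp add: abs_mult)
  qed
  also have "\<dots> \<le> \<bar>u\<bar> * exp (- ((r/\<epsilon>)^2)) * r ^ (d - 1)"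
    using t(2) r by (intro mult_right_mono mult_left_mono) auto
  also have "\<dots> = (\<bar>u\<bar> * r ^ (d - 2) * exp (- (r^2) / \<delta>^2)) * (r * exp (- (a * r^2)))"
    unfolding ex p by (simp add: ac_simps)
  also have "\<dots> \<le> (\<bar>u\<bar> * r ^ (d - 2) * exp (- (r^2) / \<delta>^2)) * (1 / sqrt a)"
    using k r by (intro mult_left_mono) auto
  finally show ?thesis by (simp add: mult.commute)
qed

theorem theorem4p1:
  fixes d :: nat and R0 \<delta> :: real and U :: "real \<Rightarrow> real"
  assumes "d \<ge> 2" and "R0 > 0"
    and "U \<in> borel_measurable (restrict_space lborel {0<..})"
    and "\<delta> > 0"
    and "(\<integral>\<^sup>+ r\<in>{R0..}. ennreal (\<bar>U r\<bar> * r ^ (d - 2) * exp (- (r^2) / \<delta>^2)) \<partial>lborel) < \<infinity>"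
  shows "\<forall>tol>0. \<exists>\<epsilon>0>0. \<forall>\<epsilon>. 0 < \<epsilon> \<and> \<epsilon> < \<epsilon>0 \<longrightarrow>
           (\<integral>\<^sup>+ r\<in>{R0..}. ennreal (\<bar>U r - U r * Erf (r / \<epsilon>)\<bar> * r ^ (d - 1)) \<partial>lborel)
             \<le> ennreal tol"
proof (intro allI impI)
  fix tol :: real assume tol: "tol > 0"
  define F where "F = (\<lambda>r. ennreal (\<bar>U r\<bar> * r ^ (d - 2) * exp (- (r^2) / \<delta>^2)) * indicator {R0..} r)"
  define M where "M = enn2real (\<integral>\<^sup>+ r. F r \<partial>lborel)"
  have MF: "(\<integral>\<^sup>+ r. F r \<partial>lborel) = ennreal M"
    unfolding M_def F_def using assms(5) by (simp add: ennreal_enn2real_if less_top[symmetric])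
  have M0: "M \<ge> 0" unfolding M_def by simp
  define U' where "U' = (\<lambda>r. indicator {0<..} r *\<^sub>R U r)"
  have U'm[measurable]: "U' \<in> borel_measurable lborel"
    unfolding U'_def using assms(3) borel_measurable_restrict_space_iff[of "{0<..}" lborel U] by simp
  have Feq: "F = (\<lambda>r. ennreal (\<bar>U' r\<bar> * r ^ (d - 2) * exp (- (r^2) / \<delta>^2)) * indicator {R0..} r)"
    unfolding F_def U'_def using assms(2) by (intro ext) (auto simp: indicator_def)
  have Fm: "F \<in> borel_measurable lborel" unfolding Feq by measurable
  define e0 where "e0 = 1 / sqrt (1/\<delta>^2 + (M/tol)^2 + 1)"
  have q1: "0 \<le> 1/\<delta>^2" by simp
  have q2: "0 \<le> (M/tol)^2" by simp
  have qpos: "0 < 1/\<delta>^2 + (M/tol)^2 + 1" using q1 q2 by linarith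
  have e0: "e0 > 0" unfolding e0_def using qpos by simp
  show "\<exists>\<epsilon>0>0. \<forall>\<epsilon>. 0 < \<epsilon> \<and> \<epsilon> < \<epsilon>0 \<longrightarrow>
           (\<integral>\<^sup>+ r\<in>{R0..}. ennreal (\<bar>U r - U r * Erf (r / \<epsilon>)\<bar> * r ^ (d - 1)) \<partial>lborel)
             \<le> ennreal tol"
  proof (intro exI[of _ e0] conjI e0 allI impI)
    fix \<epsilon> :: real assume ee: "0 < \<epsilon> \<and> \<epsilon> < e0"
    define a where "a = 1/\<epsilon>^2 - 1/\<delta>^2"
    have "sqrt (1/\<delta>^2 + (M/tol)^2 + 1) < 1 / \<epsilon>"
      using ee e0 unfolding e0_def by (simp add: field_simps)
    hence "(sqrt (1/\<delta>^2 + (M/tol)^2 + 1))^2 < (1 / \<epsilon>)^2"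
      by (intro power_strict_mono) auto
    hence "1/\<delta>^2 + (M/tol)^2 + 1 < 1/\<epsilon>^2" using qpos by (simp add: power_divide)
    hence aM: "a > (M/tol)^2 + 1" unfolding a_def by simp
    hence apos: "a > 0" by (smt (verit) zero_le_power2)
    have "sqrt ((M/tol)^2) \<le> sqrt a" using aM by (intro real_sqrt_le_mono) linarith
    hence "M/tol \<le> sqrt a" using M0 tol by simp
    hence Mle: "M * (1 / sqrt a) \<le> tol" using tol apos by (simp add: field_simps)
    have "(\<integral>\<^sup>+ r\<in>{R0..}. ennreal (\<bar>U r - U r * Erf (r / \<epsilon>)\<bar> * r ^ (d - 1)) \<partial>lborel)
        \<le> (\<integral>\<^sup>+ r. ennreal (1 / sqrt a) * F r \<partial>lborel)"
    proof (rule nn_integral_mono)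
      fix r :: real
      show "ennreal (\<bar>U r - U r * Erf (r / \<epsilon>)\<bar> * r ^ (d - 1)) * indicator {R0..} r
            \<le> ennreal (1 / sqrt a) * F r"
      proof (cases "r \<ge> R0")
        case True
        hence "r > 0" using assms(2) by simp
        from pointwise[OF this _ apos a_def assms(1), of "U r"] ee
        have "\<bar>U r - U r * Erf (r / \<epsilon>)\<bar> * r ^ (d - 1)
           \<le> (1 / sqrt a) * (\<bar>U r\<bar> * r ^ (d - 2) * exp (- (r^2) / \<delta>^2))" by simp
        hence "ennreal (\<bar>U r - U r * Erf (r / \<epsilon>)\<bar> * r ^ (d - 1))
           \<le> ennreal ((1 / sqrt a) * (\<bar>U r\<bar> * r ^ (d - 2) * exp (- (r^2) / \<delta>^2)))"
          by (rule ennreal_leI)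
        also have "\<dots> = ennreal (1 / sqrt a) * ennreal (\<bar>U r\<bar> * r ^ (d - 2) * exp (- (r^2) / \<delta>^2))"
          by (rule ennreal_mult) (use \<open>r > 0\<close> apos in auto)
        finally have "ennreal (\<bar>U r - U r * Erf (r / \<epsilon>)\<bar> * r ^ (d - 1))
           \<le> ennreal (1 / sqrt a) * ennreal (\<bar>U r\<bar> * r ^ (d - 2) * exp (- (r^2) / \<delta>^2))" .
        then show ?thesis using True by (simp add: F_def)
      next
        case False then show ?thesis by (simp add: F_def)
      qed
    qed
    also have "\<dots> = ennreal (1 / sqrt a) * ennreal M"
      using nn_integral_cmult[OF Fm, of "ennreal (1 / sqrt a)"] MF by simp
    also have "\<dots> = ennreal (M * (1 / sqrt a))"
      using apos M0 by (subst ennreal_mult) (auto simp: mult.commute)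
    also have "\<dots> \<le> ennreal tol" using Mle by (rule ennreal_leI)
    finally show "(\<integral>\<^sup>+ r\<in>{R0..}. ennreal (\<bar>U r - U r * Erf (r / \<epsilon>)\<bar> * r ^ (d - 1)) \<partial>lborel)
             \<le> ennreal tol" .
  qed
qed

end
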